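(* Let $d\ge 3$. Every unfolded simplicial $d$-manifold that is not a single $d$-simplex has an even scaffold.
   Context: A simplicial $d$-manifold is a finite simplicial complex homeomorphic to a $d$-dimensional manifold, possibly with boundary; its $d$-simplices are called facets and its $(d-1)$-simplices ridges. The dual $1$-skeleton $\mathcal{M}^*$ has a node for each facet and an arc between two facets sharing a ridge. A simplicial manifold is unfolded if its dual $1$-skeleton is a tree. The (vertex-facet) incidence graph has a node for every vertex and every facet, with an arc $(v,f)$ whenever $v$ is a vertex of $f$. An even scaffold is a subgraph of the incidence graph containing every facet node, in which every facet node has degree exactly $2$ and every vertex node has even degree. (The empty complex has the empty even scaffold.) *)

theory Defs
  imports "HOL-Analysis.Analysis"
begin

text \<open>A finite pure simplicial complex of dimension d is given by its set K of facets,
  each a set of d+1 vertices (vertex type 'v). Faces are all subsets of facets.\<close>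

definition pure_complex :: "nat \<Rightarrow> 'v set set \<Rightarrow> bool" where
  "pure_complex d K \<longleftrightarrow> finite K \<and> (\<forall>\<sigma>\<in>K. finite \<sigma> \<and> card \<sigma> = d + 1)"

text \<open>Geometric realization inside the space of functions 'v => real (product topology):
  points are barycentric coordinate functions supported on a facet.\<close>

definition realization :: "'v set set \<Rightarrow> ('v \<Rightarrow> real) set" where
  "realization K = {f. \<exists>\<sigma>\<in>K. (\<forall>v. 0 \<le> f v) \<and> (\<forall>v. v \<notin> \<sigma> \<longrightarrow> f v = 0) \<and> sum f \<sigma> = 1}"

definition half_space :: "(real^'n) set" where
  "half_space = {y. 0 \<le> y $ (SOME k. True)}"

definition is_manifold_with_boundary :: "'n::finite itself \<Rightarrow> 'a::topological_space set \<Rightarrow> bool" where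
  "is_manifold_with_boundary _ X \<longleftrightarrow>
     (\<forall>x\<in>X. \<exists>U (V :: (real^'n) set). x \<in> U \<and> openin (top_of_set X) U \<and>
        openin (top_of_set half_space) V \<and> U homeomorphic V)"

definition simplicial_manifold :: "'n::finite itself \<Rightarrow> 'v set set \<Rightarrow> bool" where
  "simplicial_manifold n K \<longleftrightarrow> pure_complex CARD('n) K \<and>
     is_manifold_with_boundary n (realization K)"

definition dual_adj :: "nat \<Rightarrow> 'v set set \<Rightarrow> 'v set \<Rightarrow> 'v set \<Rightarrow> bool" where
  "dual_adj d K \<sigma> \<tau> \<longleftrightarrow> \<sigma> \<in> K \<and> \<tau> \<in> K \<and> \<sigma> \<noteq> \<tau> \<and> card (\<sigma> \<inter> \<tau>) = d"

definition graph_connected :: "'a set \<Rightarrow> ('a \<Rightarrow> 'a \<Rightarrow> bool) \<Rightarrow> bool" where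
  "graph_connected N E \<longleftrightarrow> (\<forall>x\<in>N. \<forall>y\<in>N. (x, y) \<in> {(a, b). E a b}\<^sup>*)"

definition has_cycle :: "'a set \<Rightarrow> ('a \<Rightarrow> 'a \<Rightarrow> bool) \<Rightarrow> bool" where
  "has_cycle N E \<longleftrightarrow> (\<exists>xs. length xs \<ge> 3 \<and> distinct xs \<and> set xs \<subseteq> N \<and>
       (\<forall>i. Suc i < length xs \<longrightarrow> E (xs ! i) (xs ! Suc i)) \<and> E (last xs) (hd xs))"

definition is_tree :: "'a set \<Rightarrow> ('a \<Rightarrow> 'a \<Rightarrow> bool) \<Rightarrow> bool" where
  "is_tree N E \<longleftrightarrow> N \<noteq> {} \<and> graph_connected N E \<and> \<not> has_cycle N E"

definition unfolded :: "nat \<Rightarrow> 'v set set \<Rightarrow> bool" where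
  "unfolded d K \<longleftrightarrow> is_tree K (dual_adj d K)"

text \<open>Even scaffold: a set S of arcs (v, sigma) of the vertex-facet incidence graph such
  that every facet has degree exactly 2 and every vertex has even degree.\<close>

definition even_scaffold :: "'v set set \<Rightarrow> ('v \<times> 'v set) set \<Rightarrow> bool" where
  "even_scaffold K S \<longleftrightarrow> (\<forall>(v, \<sigma>)\<in>S. \<sigma> \<in> K \<and> v \<in> \<sigma>) \<and>
     (\<forall>\<sigma>\<in>K. card {v. (v, \<sigma>) \<in> S} = 2) \<and>
     (\<forall>v \<in> \<Union>K. even (card {\<sigma>. (v, \<sigma>) \<in> S}))"

end

theory Submission
  imports Defs
begin

definition starp :: "'a set \<Rightarrow> ('a \<Rightarrow> 'a \<Rightarrow> bool) \<Rightarrow> ('a \<Rightarrow> 'a) \<Rightarrow> bool" where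
  "starp N E c \<longleftrightarrow> (\<forall>x\<in>N. c x \<in> N \<and> c (c x) = c x \<and> (c x \<noteq> x \<longrightarrow> E x (c x)) \<and>
     (c x = x \<longrightarrow> (\<exists>y\<in>N. y \<noteq> x \<and> c y = x)))"

lemma caseA:
  assumes P: "\<And>x. x \<in> N' \<Longrightarrow> c' x \<in> N' \<and> c' (c' x) = c' x \<and> (c' x \<noteq> x \<longrightarrow> E x (c' x)) \<and>
     (c' x = x \<longrightarrow> (\<exists>y\<in>N'. y \<noteq> x \<and> c' y = x))"
    and vN: "v \<notin> N'" and uN: "u \<in> N'" and vu: "E v u" and cu: "c' u = u"
  shows "starp (insert v N') E (c'(v := u))"
  unfolding starp_def
proof
  fix x assume x: "x \<in> insert v N'"
  let ?c = "c'(v := u)"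
  show "?c x \<in> insert v N' \<and> ?c (?c x) = ?c x \<and> (?c x \<noteq> x \<longrightarrow> E x (?c x)) \<and>
     (?c x = x \<longrightarrow> (\<exists>y\<in>insert v N'. y \<noteq> x \<and> ?c y = x))"
  proof (cases "x = v")
    case True
    then show ?thesis using cu uN vN vu by auto
  next
    case False
    then have xN: "x \<in> N'" using x by simp
    have cx: "c' x \<noteq> v" using P[OF xN] vN by auto
    have A: "?c x = c' x" using False by simp
    have B: "?c (c' x) = c' x" using cx P[OF xN] by simp
    have C: "c' x = x \<Longrightarrow> \<exists>y\<in>insert v N'. y \<noteq> x \<and> ?c y = x"
    proof -
      assume cxx: "c' x = x"
      then obtain y' where y': "y' \<in> N'" "y' \<noteq> x" "c' y' = x" using P[OF xN] by blast
      then show ?thesis using vN by (intro bexI[of _ y']) auto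
    qed
    have D: "c' x \<noteq> x \<longrightarrow> E x (c' x)" using P[OF xN] by blast
    have F: "c' x \<in> N'" using P[OF xN] by blast
    show ?thesis unfolding A
    proof (intro conjI impI)
      show "c' x \<in> insert v N'" using F by blast
      show "?c (c' x) = c' x" using B .
      show "E x (c' x)" if "c' x \<noteq> x" using that D by blast
      show "\<exists>y\<in>insert v N'. y \<noteq> x \<and> ?c y = x" if "c' x = x" using that C by blast
    qed
  qed
qed

lemma caseB:
  assumes P: "\<And>x. x \<in> N' \<Longrightarrow> c' x \<in> N' \<and> c' (c' x) = c' x \<and> (c' x \<noteq> x \<longrightarrow> E x (c' x)) \<and>
     (c' x = x \<longrightarrow> (\<exists>y\<in>N'. y \<noteq> x \<and> c' y = x))"
    and vN: "v \<notin> N'" and uN: "u \<in> N'" and vu: "E v u" and cu: "c' u = w" and wu: "w \<noteq> u"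
    and noU: "\<And>x. x \<in> N' \<Longrightarrow> c' x \<noteq> u"
    and yN: "y \<in> N'" "y \<noteq> w" "y \<noteq> u" "c' y = w"
  shows "starp (insert v N') E (c'(v := u, u := u))"
  unfolding starp_def
proof
  fix x assume x: "x \<in> insert v N'"
  let ?c = "c'(v := u, u := u)"
  have uv: "u \<noteq> v" using uN vN by blast
  have cv: "?c v = u" using uv by simp
  have cuu: "?c u = u" by simp
  show "?c x \<in> insert v N' \<and> ?c (?c x) = ?c x \<and> (?c x \<noteq> x \<longrightarrow> E x (?c x)) \<and>
     (?c x = x \<longrightarrow> (\<exists>y\<in>insert v N'. y \<noteq> x \<and> ?c y = x))"
  proof (cases "x = v")
    case True
    show ?thesis unfolding True cv cuu using uN vu uv by blast
  next
    case xv: False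
    then have xN: "x \<in> N'" using x by simp
    show ?thesis
    proof (cases "x = u")
      case True
      have "v \<in> insert v N'" "v \<noteq> u" "?c v = u" using uv cv by auto
      then show ?thesis unfolding True cuu using uN by blast
    next
      case xu: False
      have cx: "c' x \<noteq> v" "c' x \<noteq> u" using P[OF xN] vN noU[OF xN] by auto
      have A: "?c x = c' x" using xu xv by simp
      have B: "?c (c' x) = c' x" using cx P[OF xN] by simp
      have C: "\<exists>y\<in>insert v N'. y \<noteq> x \<and> ?c y = x" if cxx: "c' x = x"
      proof -
        obtain y' where y': "y' \<in> N'" "y' \<noteq> x" "c' y' = x" using P[OF xN] cxx by blast
        show ?thesis
        proof (cases "y' = u")
          case True
          then have "x = w" using y' cu by simp
          moreover have "?c y = w" using yN uv vN by auto
          ultimately show ?thesis using yN by blast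
        next
          case False
          then have "?c y' = x" using y' vN by auto
          then show ?thesis using y' by blast
        qed
      qed
      have D: "c' x \<noteq> x \<longrightarrow> E x (c' x)" using P[OF xN] by blast
      have F: "c' x \<in> N'" using P[OF xN] by blast
      show ?thesis unfolding A
      proof (intro conjI impI)
        show "c' x \<in> insert v N'" using F by blast
        show "?c (c' x) = c' x" using B .
        show "E x (c' x)" if "c' x \<noteq> x" using that D by blast
        show "\<exists>y\<in>insert v N'. y \<noteq> x \<and> ?c y = x" if "c' x = x" using that C by blast
      qed
    qed
  qed
qed

lemma caseC:
  assumes P: "\<And>x. x \<in> N' \<Longrightarrow> c' x \<in> N' \<and> c' (c' x) = c' x \<and> (c' x \<noteq> x \<longrightarrow> E x (c' x)) \<and>
     (c' x = x \<longrightarrow> (\<exists>y\<in>N'. y \<noteq> x \<and> c' y = x))"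
    and vN: "v \<notin> N'" and uN: "u \<in> N'" and vu: "E v u" and cu: "c' u = w" and wu: "w \<noteq> u"
    and wN: "w \<in> N'" and cw: "c' w = w" and Ewu: "E w u"
    and noU: "\<And>x. x \<in> N' \<Longrightarrow> c' x \<noteq> u"
    and noy: "\<And>y. y \<in> N' \<Longrightarrow> y \<noteq> w \<Longrightarrow> y \<noteq> u \<Longrightarrow> c' y \<noteq> w"
  shows "starp (insert v N') E (c'(v := u, u := u, w := u))"
  unfolding starp_def
proof
  fix x assume x: "x \<in> insert v N'"
  let ?c = "c'(v := u, u := u, w := u)"
  have uv: "u \<noteq> v" using uN vN by blast
  have wv: "w \<noteq> v" using wN vN by blast
  have cv: "?c v = u" using uv wv by simp
  have cuu: "?c u = u" by simp
  have cww: "?c w = u" by simp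
  show "?c x \<in> insert v N' \<and> ?c (?c x) = ?c x \<and> (?c x \<noteq> x \<longrightarrow> E x (?c x)) \<and>
     (?c x = x \<longrightarrow> (\<exists>y\<in>insert v N'. y \<noteq> x \<and> ?c y = x))"
  proof (cases "x = v")
    case True
    show ?thesis unfolding True cv cuu using uN vu uv by blast
  next
    case xv: False
    then have xN: "x \<in> N'" using x by simp
    show ?thesis
    proof (cases "x = u")
      case True
      have "v \<in> insert v N'" "v \<noteq> u" "?c v = u" using uv cv by auto
      then show ?thesis unfolding True cuu using uN by blast
    next
      case xu: False
      show ?thesis
      proof (cases "x = w")
        case True
        show ?thesis unfolding True cww cuu using uN Ewu wu by blast
      next
        case xw: False
        have cx: "c' x \<noteq> v" "c' x \<noteq> u" "c' x \<noteq> w" using P[OF xN] vN noU[OF xN] noy[OF xN xw xu] by auto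
        have A: "?c x = c' x" using xu xv xw by simp
        have B: "?c (c' x) = c' x" using cx P[OF xN] by simp
        have C: "\<exists>y\<in>insert v N'. y \<noteq> x \<and> ?c y = x" if cxx: "c' x = x"
        proof -
          obtain y' where y': "y' \<in> N'" "y' \<noteq> x" "c' y' = x" using P[OF xN] cxx by blast
          have "y' \<noteq> u" using y' cu xw by auto
          moreover have "y' \<noteq> w" using y' cw xw by auto
          moreover have "y' \<noteq> v" using y' vN by auto
          ultimately have "?c y' = x" using y' by simp
          then show ?thesis using y' by blast
        qed
        have D: "c' x \<noteq> x \<longrightarrow> E x (c' x)" using P[OF xN] by blast
        have F: "c' x \<in> N'" using P[OF xN] by blast
        show ?thesis unfolding A
        proof (intro conjI impI)
          show "c' x \<in> insert v N'" using F by blast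
          show "?c (c' x) = c' x" using B .
          show "E x (c' x)" if "c' x \<noteq> x" using that D by blast
          show "\<exists>y\<in>insert v N'. y \<noteq> x \<and> ?c y = x" if "c' x = x" using that C by blast
        qed
      qed
    qed
  qed
qed

lemma star_ext:
  assumes sp: "starp N' E' c'" and vN: "v \<notin> N'" and uN: "u \<in> N'" and vu: "E v u"
    and EE: "\<And>a b. E' a b \<Longrightarrow> E a b"
    and sym: "\<And>a b. E a b \<Longrightarrow> E b a"
  shows "\<exists>c. starp (insert v N') E c"
proof -
  have P0: "\<And>x. x \<in> N' \<Longrightarrow> c' x \<in> N' \<and> c' (c' x) = c' x \<and> (c' x \<noteq> x \<longrightarrow> E' x (c' x)) \<and>
     (c' x = x \<longrightarrow> (\<exists>y\<in>N'. y \<noteq> x \<and> c' y = x))"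
    using sp unfolding starp_def by blast
  have P: "\<And>x. x \<in> N' \<Longrightarrow> c' x \<in> N' \<and> c' (c' x) = c' x \<and> (c' x \<noteq> x \<longrightarrow> E x (c' x)) \<and>
     (c' x = x \<longrightarrow> (\<exists>y\<in>N'. y \<noteq> x \<and> c' y = x))"
  proof -
    fix x assume "x \<in> N'"
    then show "c' x \<in> N' \<and> c' (c' x) = c' x \<and> (c' x \<noteq> x \<longrightarrow> E x (c' x)) \<and>
     (c' x = x \<longrightarrow> (\<exists>y\<in>N'. y \<noteq> x \<and> c' y = x))" using P0[of x] EE[of x "c' x"] by blast
  qed
  show ?thesis
  proof (cases "c' u = u")
    case True
    show ?thesis using caseA[OF P vN uN vu True] by blast
  next
    case False
    define w where "w = c' u"
    have wN: "w \<in> N'" and cw: "c' w = w" and Euw: "E u w" using P[OF uN] False w_def by auto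
    have wu: "w \<noteq> u" using False w_def by simp
    have noU: "\<And>x. x \<in> N' \<Longrightarrow> c' x \<noteq> u"
    proof
      fix x assume xN: "x \<in> N'" and "c' x = u"
      then have "c' u = u" using P[OF xN] by metis
      then show False using False by simp
    qed
    show ?thesis
    proof (cases "\<exists>y\<in>N'. y \<noteq> w \<and> y \<noteq> u \<and> c' y = w")
      case True
      then obtain y where yN: "y \<in> N'" "y \<noteq> w" "y \<noteq> u" "c' y = w" by blast
      show ?thesis using caseB[OF P vN uN vu w_def[symmetric] wu noU yN] by blast
    next
      case noy: False
      have noy': "\<And>y. y \<in> N' \<Longrightarrow> y \<noteq> w \<Longrightarrow> y \<noteq> u \<Longrightarrow> c' y \<noteq> w" using noy by blast
      show ?thesis using caseC[OF P vN uN vu w_def[symmetric] wu wN cw sym[OF Euw] noU noy'] by blast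
    qed
  qed
qed

lemma noncut:
  fixes N :: "'a set" and E :: "'a \<Rightarrow> 'a \<Rightarrow> bool"
  assumes fin: "finite N" and c2: "card N \<ge> 2" and rN: "r \<in> N"
    and inN: "\<And>a b. E a b \<Longrightarrow> a \<in> N \<and> b \<in> N"
    and conn: "\<forall>x\<in>N. (r, x) \<in> {(a, b). E a b}\<^sup>*"
  shows "\<exists>v\<in>N. v \<noteq> r \<and> (\<forall>x\<in>N - {v}. (r, x) \<in> {(a, b). E a b \<and> a \<noteq> v \<and> b \<noteq> v}\<^sup>*)"
proof -
  let ?R = "{(a, b). E a b}"
  define dist where "dist x = (LEAST n. (r, x) \<in> ?R ^^ n)" for x
  have dex: "(r, x) \<in> ?R ^^ dist x" if "x \<in> N" for x
  proof -
    from conn that obtain n where "(r, x) \<in> ?R ^^ n" using rtrancl_power by blast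
    then show ?thesis unfolding dist_def by (rule LeastI)
  qed
  have dle: "dist x \<le> n" if "(r, x) \<in> ?R ^^ n" for x n
    unfolding dist_def using that by (rule Least_le)
  have Nne: "N \<noteq> {}" using rN by blast
  define m where "m = Max (dist ` N)"
  have "m \<in> dist ` N" unfolding m_def using fin Nne by (intro Max_in) auto
  then obtain v where vN: "v \<in> N" and vm: "dist v = m" by blast
  have vmax: "\<forall>x\<in>N. dist x \<le> dist v" unfolding vm m_def using fin by (auto intro: Max_ge)
  have "\<exists>y\<in>N. y \<noteq> r"
  proof (rule ccontr)
    assume "\<not> ?thesis"
    then have "N = {r}" using rN by blast
    then show False using c2 by simp
  qed
  then obtain y where yN: "y \<in> N" and yr: "y \<noteq> r" by blast
  have "dist y \<noteq> 0"
  proof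
    assume "dist y = 0"
    then have "(r, y) \<in> ?R ^^ 0" using dex[OF yN] by simp
    then show False using yr by simp
  qed
  moreover have "dist r = 0" using dle[of r 0] by simp
  ultimately have vr: "v \<noteq> r" using vmax yN by (metis le_zero_eq)
  have key: "\<And>x. (r, x) \<in> ?R ^^ n \<Longrightarrow> dist x = n \<Longrightarrow> x \<noteq> v \<Longrightarrow>
     (r, x) \<in> {(a, b). E a b \<and> a \<noteq> v \<and> b \<noteq> v}\<^sup>*" for n
  proof (induction n)
    case 0
    then show ?case by simp
  next
    case (Suc n x)
    from Suc.prems(1) obtain z where rz: "(r, z) \<in> ?R ^^ n" and zx: "E z x" by auto
    have zN: "z \<in> N" using zx inN by blast
    have "dist z \<le> n" using dle[OF rz] .
    moreover have "(r, x) \<in> ?R ^^ Suc (dist z)" using dex[OF zN] zx by auto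
    then have "dist x \<le> Suc (dist z)" by (rule dle)
    ultimately have dz: "dist z = n" using Suc.prems(2) by simp
    have "z \<noteq> v"
    proof
      assume "z = v"
      then have "dist v = n" using dz by simp
      moreover have "x \<in> N" using zx inN by blast
      ultimately show False using vmax Suc.prems(2) by fastforce
    qed
    then have "(r, z) \<in> {(a, b). E a b \<and> a \<noteq> v \<and> b \<noteq> v}\<^sup>*" using Suc.IH[OF rz dz] by simp
    then show ?case using zx \<open>z \<noteq> v\<close> Suc.prems(3) by (simp add: rtrancl.rtrancl_into_rtrancl)
  qed
  show ?thesis
    using vN vr key dex by blast
qed

lemma star_exists:
  assumes "finite N" "card N \<ge> 2" "r \<in> N" "\<And>a b. E a b \<Longrightarrow> a \<in> N \<and> b \<in> N"
    "\<And>a b. E a b \<Longrightarrow> E b a" "\<And>a. \<not> E a a" "\<forall>x\<in>N. (r, x) \<in> {(a, b). E a b}\<^sup>*"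
  shows "\<exists>c. starp N E c"
  using assms
proof (induction "card N" arbitrary: N E rule: less_induct)
  case less
  note fin = less.prems(1) and c2 = less.prems(2) and rN = less.prems(3) and inN = less.prems(4)
    and sym = less.prems(5) and irr = less.prems(6) and conn = less.prems(7)
  obtain v where vN: "v \<in> N" and vr: "v \<noteq> r"
    and conn': "\<forall>x\<in>N - {v}. (r, x) \<in> {(a, b). E a b \<and> a \<noteq> v \<and> b \<noteq> v}\<^sup>*"
    using noncut[OF fin c2 rN inN conn] by blast
  have "(r, v) \<in> {(a, b). E a b}\<^sup>*" using conn vN by blast
  then obtain u where "E u v"
    using vr by (cases rule: rtranclE) auto
  then have vu: "E v u" and uN: "u \<in> N" and uv: "u \<noteq> v" using sym inN irr by blast+
  define N' where "N' = N - {v}"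
  define E' where "E' a b = (E a b \<and> a \<noteq> v \<and> b \<noteq> v)" for a b
  have uN': "u \<in> N'" using uN uv N'_def by simp
  have NN: "N = insert v N'" using vN N'_def by blast
  have vN': "v \<notin> N'" using N'_def by simp
  have cN': "card N' = card N - 1" using N'_def vN fin by simp
  show ?case
  proof (cases "card N' = 1")
    case True
    then have N': "N' = {u}" using uN' by (metis card_1_singletonE singletonD)
    have "starp N E (\<lambda>_. u)"
      unfolding starp_def NN N' using vu uv by auto
    then show ?thesis by blast
  next
    case False
    have c2': "card N' \<ge> 2" using False cN' c2 uN' fin N'_def
      by (metis One_nat_def Suc_1 Suc_leI card_gt_0_iff empty_iff finite_Diff le_neq_implies_less)
    have lt: "card N' < card N" using cN' c2 by simp
    have "\<exists>c. starp N' E' c"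
    proof (rule less.hyps[OF lt])
      show "finite N'" using fin N'_def by simp
      show "2 \<le> card N'" by (rule c2')
      show "r \<in> N'" using rN vr N'_def by simp
      show "\<And>a b. E' a b \<Longrightarrow> a \<in> N' \<and> b \<in> N'" using inN unfolding E'_def N'_def by blast
      show "\<And>a b. E' a b \<Longrightarrow> E' b a" using sym unfolding E'_def by blast
      show "\<And>a. \<not> E' a a" using irr unfolding E'_def by blast
      show "\<forall>x\<in>N'. (r, x) \<in> {(a, b). E' a b}\<^sup>*" using conn' unfolding E'_def N'_def by simp
    qed
    then obtain c' where c': "starp N' E' c'" by blast
    have "\<exists>c. starp (insert v N') E c"
      by (rule star_ext[where E=E, OF c' vN' uN' vu]) (auto simp: E'_def intro: sym)
    then show ?thesis unfolding NN .
  qed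
qed

lemma inter_big:
  fixes A B z :: "'v set"
  assumes "A \<subseteq> z" "B \<subseteq> z" "finite z" "card z = d + 1" "card A = d" "card B = d"
  shows "card (A \<inter> B) + 1 \<ge> d"
proof -
  have "finite A" "finite B" using assms finite_subset by auto
  then have "card A + card B = card (A \<union> B) + card (A \<inter> B)" by (rule card_Un_Int)
  moreover have "card (A \<union> B) \<le> card z" using assms by (intro card_mono) auto
  ultimately show ?thesis using assms by simp
qed

lemma two_subset:
  assumes "card (X :: 'v set) \<ge> 2"
  obtains p where "p \<subseteq> X" "card p = 2"
  using obtain_subset_with_card_n[OF assms] by blast

lemma star_lemma:
  fixes z :: "'v set" and T :: "'v set set"
  assumes "finite T" "z \<in> T" "T - {z} \<noteq> {}" "\<forall>x\<in>T. finite x \<and> card x = d+1"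
    "\<forall>l\<in>T-{z}. card (z \<inter> l) = d" "d \<ge> 3"
  shows "\<exists>e. (\<forall>x\<in>T. e x \<subseteq> x \<and> card (e x) = 2) \<and> (\<forall>a. even (card {x\<in>T. a \<in> e x}))"
  using assms
proof (induction "card T" arbitrary: T rule: less_induct)
  case less
  note fT = less.prems(1) and zT = less.prems(2) and ne = less.prems(3) and cd = less.prems(4)
    and cz = less.prems(5) and d3 = less.prems(6)
  have fz: "finite z" "card z = d + 1" using cd zT by auto
  obtain l1 where l1: "l1 \<in> T" "l1 \<noteq> z" using ne by blast
  have A1: "z \<inter> l1 \<subseteq> z" "card (z \<inter> l1) = d" using cz l1 by auto
  show ?case
  proof (cases "T - {z, l1} = {}")
    case True
    then have T: "T = {z, l1}" using zT l1 by auto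
    have "card (z \<inter> l1) \<ge> 2" using A1 d3 by simp
    then obtain p where p: "p \<subseteq> z \<inter> l1" "card p = 2" by (rule two_subset)
    have "\<forall>x\<in>T. p \<subseteq> x \<and> card p = 2" using p T by auto
    moreover have "even (card {x\<in>T. a \<in> p})" for a
    proof -
      have cT: "card T = 2" using T l1 by simp
      have "{x\<in>T. a \<in> p} = (if a \<in> p then T else {})" by auto
      then show ?thesis using cT by simp
    qed
    ultimately have H: "(\<forall>x\<in>T. p \<subseteq> x \<and> card p = 2) \<and> (\<forall>a. even (card {x\<in>T. a \<in> p}))"
      by simp
    show ?thesis by (rule exI[of _ "\<lambda>_. p"]) (use H in simp)
  next
    case False
    then obtain l2 where l2: "l2 \<in> T" "l2 \<noteq> z" "l2 \<noteq> l1" by blast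
    have A2: "z \<inter> l2 \<subseteq> z" "card (z \<inter> l2) = d" using cz l2 by auto
    have I12: "card ((z \<inter> l1) \<inter> (z \<inter> l2)) + 1 \<ge> d"
      using inter_big[OF A1(1) A2(1) fz A1(2) A2(2)] .
    show ?thesis
    proof (cases "T - {z, l1, l2} = {}")
      case True
      then have T: "T = {z, l1, l2}" using zT l1 l2 by auto
      have "(z \<inter> l1) \<inter> (z \<inter> l2) \<noteq> {}"
      proof
        assume "(z \<inter> l1) \<inter> (z \<inter> l2) = {}"
        then show False using I12 d3 by simp
      qed
      then obtain a where a: "a \<in> z \<inter> l1 \<inter> l2" by blast
      have "(z \<inter> l1) - {a} \<noteq> {}"
      proof
        assume "(z \<inter> l1) - {a} = {}"
        then have "z \<inter> l1 \<subseteq> {a}" by blast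
        then have "card (z \<inter> l1) \<le> card {a}" by (intro card_mono) auto
        then show False using A1 d3 by simp
      qed
      then obtain b where b: "b \<in> z \<inter> l1" "b \<noteq> a" by blast
      have "(z \<inter> l2) - {a, b} \<noteq> {}"
      proof
        assume "(z \<inter> l2) - {a, b} = {}"
        then have "z \<inter> l2 \<subseteq> {a, b}" by blast
        then have "card (z \<inter> l2) \<le> card {a, b}" by (intro card_mono) auto
        also have "\<dots> \<le> 2" by (simp add: card_insert_le_m1)
        finally show False using A2 d3 by simp
      qed
      then obtain c where c: "c \<in> z \<inter> l2" "c \<noteq> a" "c \<noteq> b" by blast
      define e where "e x = (if x = l1 then {a, b} else if x = z then {b, c} else {c, a})" for x
      have "\<forall>x\<in>T. e x \<subseteq> x \<and> card (e x) = 2"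
        using T a b c l1 l2 by (auto simp: e_def)
      moreover have "even (card {x\<in>T. q \<in> e x})" for q
      proof -
        have "q = a \<or> q = b \<or> q = c \<or> (q \<noteq> a \<and> q \<noteq> b \<and> q \<noteq> c)" by blast
        then show ?thesis
        proof (elim disjE)
          assume "q = a"
          then have Q: "{x\<in>T. q \<in> e x} = {l1, l2}" using T a b c l1 l2 by (auto simp: e_def)
          show ?thesis unfolding Q using l2 by simp
        next
          assume "q = b"
          then have Q: "{x\<in>T. q \<in> e x} = {l1, z}" using T a b c l1 l2 by (auto simp: e_def)
          show ?thesis unfolding Q using l1 by simp
        next
          assume "q = c"
          then have Q: "{x\<in>T. q \<in> e x} = {z, l2}" using T a b c l1 l2 by (auto simp: e_def)
          show ?thesis unfolding Q using l2 by simp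
        next
          assume "q \<noteq> a \<and> q \<noteq> b \<and> q \<noteq> c"
          then have Q: "{x\<in>T. q \<in> e x} = {}" using T by (auto simp: e_def)
          show ?thesis unfolding Q by simp
        qed
      qed
      ultimately show ?thesis by blast
    next
      case False
      define T' where "T' = T - {l1, l2}"
      have lt: "card T' < card T" unfolding T'_def
        by (rule psubset_card_mono) (use fT l1 in auto)
      have "\<exists>e. (\<forall>x\<in>T'. e x \<subseteq> x \<and> card (e x) = 2) \<and> (\<forall>a. even (card {x\<in>T'. a \<in> e x}))"
      proof (rule less.hyps[OF lt])
        show "finite T'" using fT unfolding T'_def by simp
        show "z \<in> T'" using zT l1 l2 unfolding T'_def by simp
        show "T' - {z} \<noteq> {}" using False unfolding T'_def by blast
        show "\<forall>x\<in>T'. finite x \<and> card x = d + 1" using cd unfolding T'_def by simp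
        show "\<forall>l\<in>T' - {z}. card (z \<inter> l) = d" using cz unfolding T'_def by simp
        show "3 \<le> d" by (rule d3)
      qed
      then obtain e' where e': "\<forall>x\<in>T'. e' x \<subseteq> x \<and> card (e' x) = 2"
        "\<forall>a. even (card {x\<in>T'. a \<in> e' x})" by blast
      have "card (l1 \<inter> l2) \<ge> 2"
      proof -
        have "card ((z \<inter> l1) \<inter> (z \<inter> l2)) \<le> card (l1 \<inter> l2)"
          using cd l1 by (intro card_mono) auto
        then show ?thesis using I12 d3 by simp
      qed
      then obtain p where p: "p \<subseteq> l1 \<inter> l2" "card p = 2" by (rule two_subset)
      define e where "e = e'(l1 := p, l2 := p)"
      have "\<forall>x\<in>T. e x \<subseteq> x \<and> card (e x) = 2"
        using e' p unfolding e_def T'_def by auto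
      moreover have "even (card {x\<in>T. q \<in> e x})" for q
      proof -
        have fin: "finite {x\<in>T'. q \<in> e' x}" using fT T'_def by simp
        have eq: "{x\<in>T. q \<in> e x} = {x\<in>T'. q \<in> e' x} \<union> (if q \<in> p then {l1, l2} else {})"
          using l1 l2 unfolding e_def T'_def by auto
        have dj: "{x\<in>T'. q \<in> e' x} \<inter> (if q \<in> p then {l1, l2} else {}) = {}"
          unfolding T'_def by auto
        have "card {x\<in>T. q \<in> e x} = card {x\<in>T'. q \<in> e' x} + card (if q \<in> p then {l1, l2} else {})"
          unfolding eq using fin dj by (intro card_Un_disjoint) auto
        then show ?thesis using e'(2) l2 by (cases "q \<in> p") auto
      qed
      ultimately show ?thesis by blast
    qed
  qed
qed

theorem lemma6:
  fixes K :: "'v set set"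
  assumes "CARD('n::finite) \<ge> 3"
    and "simplicial_manifold TYPE('n) K"
    and "unfolded CARD('n) K"
    and "card K \<noteq> 1"
  shows "\<exists>S. even_scaffold K S"
proof -
  define d where "d = CARD('n)"
  have d3: "d \<ge> 3" using assms(1) d_def by simp
  have pc: "pure_complex d K" using assms(2) unfolding simplicial_manifold_def d_def by blast
  then have finK: "finite K" and cd: "\<forall>x\<in>K. finite x \<and> card x = d + 1"
    unfolding pure_complex_def by auto
  have tr: "is_tree K (dual_adj d K)" using assms(3) unfolding unfolded_def d_def by blast
  then have Kne: "K \<noteq> {}" and gc: "graph_connected K (dual_adj d K)" unfolding is_tree_def by auto
  obtain r where rK: "r \<in> K" using Kne by blast
  have c2: "card K \<ge> 2"
  proof -
    have "card K \<noteq> 0" using finK Kne by simp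
    then show ?thesis using assms(4) by linarith
  qed
  have "\<exists>c. starp K (dual_adj d K) c"
  proof (rule star_exists[OF finK c2 rK])
    show "\<And>a b. dual_adj d K a b \<Longrightarrow> a \<in> K \<and> b \<in> K" unfolding dual_adj_def by blast
    show "\<And>a b. dual_adj d K a b \<Longrightarrow> dual_adj d K b a" unfolding dual_adj_def by (auto simp: Int_commute)
    show "\<And>a. \<not> dual_adj d K a a" unfolding dual_adj_def by blast
    show "\<forall>x\<in>K. (r, x) \<in> {(a, b). dual_adj d K a b}\<^sup>*" using gc rK unfolding graph_connected_def by blast
  qed
  then obtain c where sp: "starp K (dual_adj d K) c" by blast
  have P: "\<And>x. x \<in> K \<Longrightarrow> c x \<in> K \<and> c (c x) = c x \<and> (c x \<noteq> x \<longrightarrow> dual_adj d K x (c x)) \<and>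
     (c x = x \<longrightarrow> (\<exists>y\<in>K. y \<noteq> x \<and> c y = x))"
    using sp unfolding starp_def by blast
  define Cs where "Cs = {z\<in>K. c z = z}"
  define T where "T z = {x\<in>K. c x = z}" for z
  have "\<forall>z\<in>Cs. \<exists>e. (\<forall>x\<in>T z. e x \<subseteq> x \<and> card (e x) = 2) \<and> (\<forall>a. even (card {x\<in>T z. a \<in> e x}))"
  proof
    fix z assume z: "z \<in> Cs"
    then have zK: "z \<in> K" and czz: "c z = z" unfolding Cs_def by auto
    show "\<exists>e. (\<forall>x\<in>T z. e x \<subseteq> x \<and> card (e x) = 2) \<and> (\<forall>a. even (card {x\<in>T z. a \<in> e x}))"
    proof (rule star_lemma)
      show "finite (T z)" using finK unfolding T_def by simp
      show "z \<in> T z" using zK czz unfolding T_def by simp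
      show "T z - {z} \<noteq> {}" using P[OF zK] czz unfolding T_def by blast
      show "\<forall>x\<in>T z. finite x \<and> card x = d + 1" using cd unfolding T_def by simp
      show "\<forall>l\<in>T z - {z}. card (z \<inter> l) = d"
      proof
        fix l assume l: "l \<in> T z - {z}"
        then have lK: "l \<in> K" and cl: "c l = z" "l \<noteq> z" unfolding T_def by auto
        then have "dual_adj d K l z" using P[OF lK] by metis
        then show "card (z \<inter> l) = d" unfolding dual_adj_def by (simp add: Int_commute)
      qed
      show "3 \<le> d" by (rule d3)
    qed
  qed
  then obtain F where F: "\<forall>z\<in>Cs. (\<forall>x\<in>T z. F z x \<subseteq> x \<and> card (F z x) = 2) \<and> (\<forall>a. even (card {x\<in>T z. a \<in> F z x}))"
    by (rule bchoice[elim_format]) blast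
  define e where "e x = F (c x) x" for x
  have cCs: "c x \<in> Cs" and xT: "x \<in> T (c x)" if "x \<in> K" for x
    using P[OF that] that unfolding Cs_def T_def by auto
  have e1: "e x \<subseteq> x \<and> card (e x) = 2" if "x \<in> K" for x
    using F cCs[OF that] xT[OF that] unfolding e_def by blast
  have e2: "even (card {x\<in>K. a \<in> e x})" for a
  proof -
    have eq: "{x\<in>K. a \<in> e x} = (\<Union>z\<in>Cs. {x\<in>T z. a \<in> F z x})"
      unfolding e_def T_def Cs_def using P by auto
    have "card (\<Union>z\<in>Cs. {x\<in>T z. a \<in> F z x}) = (\<Sum>z\<in>Cs. card {x\<in>T z. a \<in> F z x})"
      by (rule card_UN_disjoint) (use finK in \<open>auto simp: Cs_def T_def\<close>)
    moreover have "even (\<Sum>z\<in>Cs. card {x\<in>T z. a \<in> F z x})"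
      by (rule dvd_sum) (use F in blast)
    ultimately show ?thesis unfolding eq by simp
  qed
  define S where "S = {(a, x). x \<in> K \<and> a \<in> e x}"
  have "even_scaffold K S"
    unfolding even_scaffold_def
  proof (intro conjI)
    show "\<forall>(v, \<sigma>)\<in>S. \<sigma> \<in> K \<and> v \<in> \<sigma>" unfolding S_def using e1 by blast
    show "\<forall>\<sigma>\<in>K. card {v. (v, \<sigma>) \<in> S} = 2"
    proof
      fix \<sigma> assume s: "\<sigma> \<in> K"
      have "{v. (v, \<sigma>) \<in> S} = e \<sigma>" unfolding S_def using s by auto
      then show "card {v. (v, \<sigma>) \<in> S} = 2" using e1[OF s] by simp
    qed
    show "\<forall>v\<in>\<Union>K. even (card {\<sigma>. (v, \<sigma>) \<in> S})"
    proof
      fix v assume "v \<in> \<Union>K"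
      have "{\<sigma>. (v, \<sigma>) \<in> S} = {x\<in>K. v \<in> e x}" unfolding S_def by auto
      then show "even (card {\<sigma>. (v, \<sigma>) \<in> S})" using e2[of v] by simp
    qed
  qed
  then show ?thesis by blast
qed

end
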